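(* On the point-like global monopole spacetime $(M,g)$, the Ricci tensor $S$ satisfies: (a) $(M,g)$ is not Einstein, i.e. there is no function $f$ with $S=f\,g$, and it is not quasi-Einstein, i.e. there is no function $a$ for which $S-a\,g$ has rank $1$ at every point; (b) $(M,g)$ is an Einstein manifold of degree $2$: $S^2=\frac{\alpha^2-1}{r^2}\,S$; (c) $(M,g)$ is $2$-quasi-Einstein: there is a function $a$ (namely $a=0$) such that $S-a\,g$ has rank $2$ at every point; (d) the Riemann curvature tensor decomposes as $R=\frac{r^2}{2(\alpha^2-1)}\,S\wedge S$.
   Context: Let $M=\{(t,r,\theta,\phi):t\in\mathbb R,\ r>0,\ 0<\theta<\pi,\ 0<\phi<2\pi\}$ with coordinates $x^1=t,x^2=r,x^3=\theta,x^4=\phi$, equipped with the Lorentzian metric (point-like global monopole metric) $g=-dt^2+\alpha^{-2}dr^2+r^2(d\theta^2+\sin^2\theta\,d\phi^2)$, where $\alpha$ is a constant with $0<\alpha<1$. Let $\Gamma^l_{ij}$ be the Christoffel symbols of the Levi-Civita connection $\nabla$. Curvature conventions: $R^l{}_{ijk}=\partial_j\Gamma^l_{ik}-\partial_k\Gamma^l_{ij}+\Gamma^l_{mj}\Gamma^m_{ik}-\Gamma^l_{mk}\Gamma^m_{ij}$ (components of the $(1,3)$ curvature tensor $\widetilde R$), $R_{hijk}=g_{hl}R^l{}_{ijk}$ (components of the $(0,4)$ Riemann tensor $R$), Ricci tensor $S_{ij}=g^{hk}R_{hijk}$, scalar curvature $\kappa=g^{ij}S_{ij}$. The tensor $S^2$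 is $S^2_{ij}=S_{ik}g^{kl}S_{lj}$. For symmetric $(0,2)$-tensors $A,B$ the Kulkarni–Nomizu product is $(A\wedge B)_{hijk}=A_{hk}B_{ij}+A_{ij}B_{hk}-A_{hj}B_{ik}-A_{ik}B_{hj}$. *)

theory Defs
  imports "HOL-Analysis.Analysis"
begin

text \<open>Points of M are vectors p :: real^4 with coordinates
  x^1 = t = p$1, x^2 = r = p$2, x^3 = theta = p$3, x^4 = phi = p$4.
  Indices i j k ... range over the type 4 (the four values 1,2,3,4).\<close>

definition monopole_M :: "(real^4) set" where
  "monopole_M = {p. p$2 > 0 \<and> 0 < p$3 \<and> p$3 < pi \<and> 0 < p$4 \<and> p$4 < 2*pi}"

definition gm :: "real \<Rightarrow> real^4 \<Rightarrow> 4 \<Rightarrow> 4 \<Rightarrow> real" where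
  "gm \<alpha> p i j =
     (if i \<noteq> j then 0
      else if i = 1 then -1
      else if i = 2 then 1 / \<alpha>^2
      else if i = 3 then (p$2)^2
      else (p$2)^2 * (sin (p$3))^2)"

definition gmat :: "real \<Rightarrow> real^4 \<Rightarrow> real^4^4" where
  "gmat \<alpha> p = (\<chi> i j. gm \<alpha> p i j)"

definition ginv :: "real \<Rightarrow> real^4 \<Rightarrow> 4 \<Rightarrow> 4 \<Rightarrow> real" where
  "ginv \<alpha> p i j = matrix_inv (gmat \<alpha> p) $ i $ j"

definition pd :: "4 \<Rightarrow> (real^4 \<Rightarrow> real) \<Rightarrow> real^4 \<Rightarrow> real" where
  "pd j F p = deriv (\<lambda>s. F (\<chi> k. if k = j then s else p$k)) (p$j)"

definition Gam :: "real \<Rightarrow> real^4 \<Rightarrow> 4 \<Rightarrow> 4 \<Rightarrow> 4 \<Rightarrow> real" where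
  "Gam \<alpha> p l i j = (1/2) * (\<Sum>m\<in>UNIV. ginv \<alpha> p l m *
      (pd i (\<lambda>q. gm \<alpha> q m j) p + pd j (\<lambda>q. gm \<alpha> q m i) p - pd m (\<lambda>q. gm \<alpha> q i j) p))"

definition Rup :: "real \<Rightarrow> real^4 \<Rightarrow> 4 \<Rightarrow> 4 \<Rightarrow> 4 \<Rightarrow> 4 \<Rightarrow> real" where
  "Rup \<alpha> p l i j k =
     pd j (\<lambda>q. Gam \<alpha> q l i k) p - pd k (\<lambda>q. Gam \<alpha> q l i j) p
     + (\<Sum>m\<in>UNIV. Gam \<alpha> p l m j * Gam \<alpha> p m i k)
     - (\<Sum>m\<in>UNIV. Gam \<alpha> p l m k * Gam \<alpha> p m i j)"

definition Rdown :: "real \<Rightarrow> real^4 \<Rightarrow> 4 \<Rightarrow> 4 \<Rightarrow> 4 \<Rightarrow> 4 \<Rightarrow> real" where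
  "Rdown \<alpha> p h i j k = (\<Sum>l\<in>UNIV. gm \<alpha> p h l * Rup \<alpha> p l i j k)"

definition Ric :: "real \<Rightarrow> real^4 \<Rightarrow> 4 \<Rightarrow> 4 \<Rightarrow> real" where
  "Ric \<alpha> p i j = (\<Sum>h\<in>UNIV. \<Sum>k\<in>UNIV. ginv \<alpha> p h k * Rdown \<alpha> p h i j k)"

definition Ric2 :: "real \<Rightarrow> real^4 \<Rightarrow> 4 \<Rightarrow> 4 \<Rightarrow> real" where
  "Ric2 \<alpha> p i j = (\<Sum>k\<in>UNIV. \<Sum>l\<in>UNIV. Ric \<alpha> p i k * ginv \<alpha> p k l * Ric \<alpha> p l j)"

definition KN :: "(4 \<Rightarrow> 4 \<Rightarrow> real) \<Rightarrow> (4 \<Rightarrow> 4 \<Rightarrow> real) \<Rightarrow> 4 \<Rightarrow> 4 \<Rightarrow> 4 \<Rightarrow> 4 \<Rightarrow> real" where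
  "KN A B h i j k = A h k * B i j + A i j * B h k - A h j * B i k - A i k * B h j"

definition tmat :: "(4 \<Rightarrow> 4 \<Rightarrow> real) \<Rightarrow> real^4^4" where
  "tmat A = (\<chi> i j. A i j)"

end

theory Submission
  imports Defs
begin

lemma cases4: fixes x :: 4 obtains "x = 1" | "x = 2" | "x = 3" | "x = 4"
  using exhaust_4 by blast

lemma pd_cong:
  assumes p: "p \<in> monopole_M" and FG: "\<And>q. q \<in> monopole_M \<Longrightarrow> F q = G q"
  shows "pd j F p = pd j G p"
proof -
  let ?L = "\<lambda>s. (\<chi> k. if k = j then s else p$k) :: real^4"
  have ev: "eventually (\<lambda>s. ?L s \<in> monopole_M) (nhds (p$j))"
  proof (cases rule: cases4[of j])
    case 1
    then show ?thesis using p by (simp add: monopole_M_def)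
  next
    case 2
    have "open {0::real<..}" by simp
    moreover have "p$j \<in> {0<..}" using p 2 by (simp add: monopole_M_def)
    ultimately have "eventually (\<lambda>s. s \<in> {0::real<..}) (nhds (p$j))"
      using eventually_nhds_in_open by blast
    then show ?thesis by eventually_elim (use p 2 in \<open>simp add: monopole_M_def\<close>)
  next
    case 3
    have "open {0::real<..<pi}" by simp
    moreover have "p$j \<in> {0<..<pi}" using p 3 by (simp add: monopole_M_def)
    ultimately have "eventually (\<lambda>s. s \<in> {0::real<..<pi}) (nhds (p$j))"
      using eventually_nhds_in_open by blast
    then show ?thesis by eventually_elim (use p 3 in \<open>simp add: monopole_M_def\<close>)
  next
    case 4
    have "open {0::real<..<2*pi}" by simp
    moreover have "p$j \<in> {0<..<2*pi}" using p 4 by (simp add: monopole_M_def)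
    ultimately have "eventually (\<lambda>s. s \<in> {0::real<..<2*pi}) (nhds (p$j))"
      using eventually_nhds_in_open by blast
    then show ?thesis by eventually_elim (use p 4 in \<open>simp add: monopole_M_def\<close>)
  qed
  have "eventually (\<lambda>s. F (?L s) = G (?L s)) (nhds (p$j))"
    using ev by eventually_elim (simp add: FG)
  then show ?thesis unfolding pd_def by (rule deriv_cong_ev) simp
qed

lemma matrix_inv_eqI:
  fixes A B :: "real^4^4"
  assumes "A ** B = mat 1" "B ** A = mat 1"
  shows "matrix_inv A = B"
proof -
  have ex: "\<exists>A'. A ** A' = mat 1 \<and> A' ** A = mat 1" using assms by blast
  define C where "C = matrix_inv A"
  have C: "A ** C = mat 1" "C ** A = mat 1"
    using someI_ex[OF ex] unfolding C_def matrix_inv_def by auto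
  have "C = C ** (A ** B)" using assms by (simp add: matrix_mul_rid)
  also have "\<dots> = (C ** A) ** B" by (simp add: matrix_mul_assoc)
  also have "\<dots> = B" using C by (simp add: matrix_mul_lid)
  finally show ?thesis unfolding C_def .
qed

definition gi :: "real \<Rightarrow> real^4 \<Rightarrow> 4 \<Rightarrow> 4 \<Rightarrow> real" where
  "gi \<alpha> p i j =
     (if i \<noteq> j then 0
      else if i = 1 then -1
      else if i = 2 then \<alpha>^2
      else if i = 3 then 1/(p$2)^2
      else 1/((p$2)^2 * (sin (p$3))^2))"

lemma sin_ne0: "p \<in> monopole_M \<Longrightarrow> sin (p$3) \<noteq> 0"
  by (simp add: monopole_M_def sin_gt_zero less_imp_neq[symmetric])

lemma ginv_eq:
  assumes a: "\<alpha> \<noteq> 0" and p: "p \<in> monopole_M"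
  shows "ginv \<alpha> p i j = gi \<alpha> p i j"
proof -
  have r: "p$2 \<noteq> 0" using p by (auto simp: monopole_M_def)
  have s: "sin (p$3) \<noteq> 0" using sin_ne0[OF p] .
  have "matrix_inv (gmat \<alpha> p) = (\<chi> i j. gi \<alpha> p i j)"
    apply (rule matrix_inv_eqI)
    using a r s
    by (auto simp: matrix_matrix_mult_def gmat_def gm_def gi_def mat_def vec_eq_iff forall_4 sum_4)
  then show ?thesis by (simp add: ginv_def)
qed

definition dg :: "real \<Rightarrow> real^4 \<Rightarrow> 4 \<Rightarrow> 4 \<Rightarrow> 4 \<Rightarrow> real" where
  "dg \<alpha> p j m i = (if m \<noteq> i then 0 else if j = 2 \<and> m = 3 then 2*p$2
     else if j = 2 \<and> m = 4 then 2*p$2*(sin(p$3))^2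
     else if j = 3 \<and> m = 4 then 2*(p$2)^2 * sin (p$3) * cos (p$3) else 0)"

lemma deriv_const': "deriv (\<lambda>s. c) x = (0::real)" by simp

lemma pd_gm: "pd j (\<lambda>q. gm \<alpha> q m i) p = dg \<alpha> p j m i"
  unfolding pd_def gm_def dg_def
  by (cases rule: cases4[of j]; cases rule: cases4[of m]; cases rule: cases4[of i];
      simp; (rule DERIV_imp_deriv; auto intro!: derivative_eq_intros simp: power2_eq_square)?)

lemma d1: "deriv (\<lambda>s. - (a * s * c)) x = - (a * (c::real))"
  by (rule DERIV_imp_deriv) (auto intro!: derivative_eq_intros)
lemma d2: "deriv (\<lambda>s. - (a * r * (sin s)\<^sup>2)) x = - (a * r * 2 * sin x * cos x)"
  by (rule DERIV_imp_deriv) ((rule derivative_eq_intros refl)+, simp)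
lemma d3: "deriv (\<lambda>s. - (sin s * cos s)) x = (sin x)\<^sup>2 - (cos x)\<^sup>2"
  by (rule DERIV_imp_deriv) ((rule derivative_eq_intros refl)+, simp add: power2_eq_square)
lemma d4: "sin x \<noteq> 0 \<Longrightarrow> deriv (\<lambda>s. cos s / sin s) x = - (1 / (sin x)\<^sup>2)"
proof -
  assume s: "sin x \<noteq> 0"
  have h: "cos x * cos x + sin x * sin x = 1" using sin_cos_squared_add[of x] by (simp add: power2_eq_square)
  have e: "cos x * (cos x * (sin x * sin x)) + sin x * (sin x * (sin x * sin x)) = (cos x * cos x + sin x * sin x) * (sin x * sin x)"
    by (simp only: distrib_right mult.assoc)
  show ?thesis
  apply (rule DERIV_imp_deriv)
  apply (rule derivative_eq_intros refl | rule s)+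
  apply (simp add: field_simps power2_eq_square s)
  using e h by simp
qed

definition GG :: "real \<Rightarrow> real \<Rightarrow> real \<Rightarrow> 4 \<Rightarrow> 4 \<Rightarrow> 4 \<Rightarrow> real" where
  "GG a r t l i j =
    (if l = 2 \<and> i = 3 \<and> j = 3 then -(a^2*r)
     else if l = 2 \<and> i = 4 \<and> j = 4 then -(a^2 * r * (sin t)^2)
     else if l = 3 \<and> ((i = 2 \<and> j = 3) \<or> (i = 3 \<and> j = 2)) then 1/r
     else if l = 3 \<and> i = 4 \<and> j = 4 then -(sin t * cos t)
     else if l = 4 \<and> ((i = 2 \<and> j = 4) \<or> (i = 4 \<and> j = 2)) then 1/r
     else if l = 4 \<and> ((i = 3 \<and> j = 4) \<or> (i = 4 \<and> j = 3)) then cos t / sin t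
     else 0)"

lemma Gam_eq:
  assumes a: "\<alpha> \<noteq> 0" and p: "p \<in> monopole_M"
  shows "Gam \<alpha> p l i j = GG \<alpha> (p$2) (p$3) l i j"
proof -
  have r: "p$2 \<noteq> 0" using p by (auto simp: monopole_M_def)
  have s: "sin (p$3) \<noteq> 0" using sin_ne0[OF p] .
  show ?thesis
    unfolding Gam_def ginv_eq[OF a p] pd_gm sum_4
    using a r s
    by (cases rule: cases4[of l]; cases rule: cases4[of i]; cases rule: cases4[of j];
        simp add: gi_def dg_def GG_def field_simps power2_eq_square)
qed

definition dGG :: "real \<Rightarrow> real \<Rightarrow> real \<Rightarrow> 4 \<Rightarrow> 4 \<Rightarrow> 4 \<Rightarrow> 4 \<Rightarrow> real" where
  "dGG a r t j l i k =
    (if j = 2 then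
       (if l = 2 \<and> i = 3 \<and> k = 3 then -(a^2)
        else if l = 2 \<and> i = 4 \<and> k = 4 then -(a^2 * (sin t)^2)
        else if l = 3 \<and> ((i = 2 \<and> k = 3) \<or> (i = 3 \<and> k = 2)) then -1/r^2
        else if l = 4 \<and> ((i = 2 \<and> k = 4) \<or> (i = 4 \<and> k = 2)) then -1/r^2
        else 0)
     else if j = 3 then
       (if l = 2 \<and> i = 4 \<and> k = 4 then -(a^2 * r * 2 * sin t * cos t)
        else if l = 3 \<and> i = 4 \<and> k = 4 then -((cos t)^2 - (sin t)^2)
        else if l = 4 \<and> ((i = 3 \<and> k = 4) \<or> (i = 4 \<and> k = 3)) then -1/(sin t)^2
        else 0)
     else 0)"

lemma pd_GG:
  assumes p: "p \<in> monopole_M"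
  shows "pd j (\<lambda>q. GG \<alpha> (q$2) (q$3) l i k) p = dGG \<alpha> (p$2) (p$3) j l i k"
proof -
  have r: "p$2 \<noteq> 0" using p by (auto simp: monopole_M_def)
  have s: "sin (p$3) \<noteq> 0" using sin_ne0[OF p] .
  show ?thesis
    unfolding pd_def GG_def dGG_def
    using r s
    by (cases rule: cases4[of j]; cases rule: cases4[of l]; cases rule: cases4[of i]; cases rule: cases4[of k];
      simp add: d1 d2 d3 d4; (rule DERIV_imp_deriv; auto intro!: derivative_eq_intros simp: power2_eq_square field_simps)?)
qed


lemma Rup_eq:
  assumes a: "\<alpha> \<noteq> 0" and p: "p \<in> monopole_M"
  shows "Rup \<alpha> p l i j k = dGG \<alpha> (p$2) (p$3) j l i k - dGG \<alpha> (p$2) (p$3) k l i j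
     + (\<Sum>m\<in>UNIV. GG \<alpha> (p$2) (p$3) l m j * GG \<alpha> (p$2) (p$3) m i k)
     - (\<Sum>m\<in>UNIV. GG \<alpha> (p$2) (p$3) l m k * GG \<alpha> (p$2) (p$3) m i j)"
proof -
  have c: "pd j' (\<lambda>q. Gam \<alpha> q l' i' k') p = dGG \<alpha> (p$2) (p$3) j' l' i' k'" for j' l' i' k'
  proof -
    have "pd j' (\<lambda>q. Gam \<alpha> q l' i' k') p = pd j' (\<lambda>q. GG \<alpha> (q$2) (q$3) l' i' k') p"
      by (rule pd_cong[OF p]) (simp add: Gam_eq[OF a])
    then show ?thesis using pd_GG[OF p] by simp
  qed
  show ?thesis unfolding Rup_def c Gam_eq[OF a p] ..
qed

definition RdE :: "real \<Rightarrow> real \<Rightarrow> real \<Rightarrow> 4 \<Rightarrow> 4 \<Rightarrow> 4 \<Rightarrow> 4 \<Rightarrow> real" where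
  "RdE a r t h i j k =
     (if h = 3 \<and> i = 4 \<and> j = 3 \<and> k = 4 then (1 - a^2) * r^2 * (sin t)^2
      else if h = 3 \<and> i = 4 \<and> j = 4 \<and> k = 3 then - ((1 - a^2) * r^2 * (sin t)^2)
      else if h = 4 \<and> i = 3 \<and> j = 3 \<and> k = 4 then - ((1 - a^2) * r^2 * (sin t)^2)
      else if h = 4 \<and> i = 3 \<and> j = 4 \<and> k = 3 then (1 - a^2) * r^2 * (sin t)^2
      else 0)"


definition gE :: "real \<Rightarrow> real \<Rightarrow> real \<Rightarrow> 4 \<Rightarrow> real" where
  "gE a r t h = (if h = 1 then -1 else if h = 2 then 1/a^2 else if h = 3 then r^2 else r^2 * (sin t)^2)"

lemma alg:
  fixes a r t :: real
  assumes "a \<noteq> 0" "r \<noteq> 0" "sin t \<noteq> 0"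
  shows "\<forall>h i j k. gE a r t h * (dGG a r t j h i k - dGG a r t k h i j
     + (\<Sum>m\<in>UNIV. GG a r t h m j * GG a r t m i k)
     - (\<Sum>m\<in>UNIV. GG a r t h m k * GG a r t m i j)) = RdE a r t h i j k"
  unfolding sum_4 forall_4
  by (intro conjI; simp add: gE_def GG_def dGG_def RdE_def assms; simp add: field_simps power2_eq_square assms; (insert sin_cos_squared_add[of t], algebra))


lemma Rdown_eq:
  assumes a: "\<alpha> \<noteq> 0" and p: "p \<in> monopole_M"
  shows "Rdown \<alpha> p h i j k = RdE \<alpha> (p$2) (p$3) h i j k"
proof -
  have r: "p$2 \<noteq> 0" using p by (auto simp: monopole_M_def)
  have s: "sin (p$3) \<noteq> 0" using sin_ne0[OF p] .
  have "Rdown \<alpha> p h i j k = gE \<alpha> (p$2) (p$3) h * Rup \<alpha> p h i j k"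
    unfolding Rdown_def sum_4 by (cases rule: cases4[of h]; simp add: gm_def gE_def)
  also have "\<dots> = RdE \<alpha> (p$2) (p$3) h i j k"
    unfolding Rup_eq[OF a p] using alg[OF a r s] by blast
  finally show ?thesis .
qed

lemma row_tmat: "row i (tmat D) = (\<chi> j. D i j)"
  by (simp add: row_def tmat_def)

lemma rank_ge2:
  assumes diag: "\<And>i j. i \<noteq> j \<Longrightarrow> D i j = 0" and uv: "u \<noteq> v" and du: "D u u \<noteq> 0" and dv: "D v v \<noteq> 0"
  shows "2 \<le> rank (tmat D)"
proof -
  let ?B = "{row u (tmat D), row v (tmat D)}"
  have sub: "?B \<subseteq> rows (tmat D)" by (auto simp: rows_def)
  have ne: "row u (tmat D) \<noteq> row v (tmat D)"
  proof
    assume "row u (tmat D) = row v (tmat D)"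
    then have "row u (tmat D) $ u = row v (tmat D) $ u" by simp
    then show False using du diag[of v u] uv by (simp add: row_tmat)
  qed
  have s0: "(\<Sum>k\<in>UNIV. D x k * D y k) = 0" if "x \<noteq> y" for x y
    by (rule sum.neutral) (metis diag that mult_zero_left mult_zero_right)
  have orth: "pairwise orthogonal ?B"
    unfolding pairwise_def orthogonal_def using s0 uv
    by (auto simp: row_tmat inner_vec_def)
  have z: "0 \<notin> ?B"
    using du dv by (auto simp: row_tmat vec_eq_iff)
  have ind: "independent ?B" by (rule pairwise_orthogonal_independent[OF orth z])
  have "card ?B \<le> dim (rows (tmat D))" by (rule independent_card_le_dim[OF sub ind])
  moreover have "card ?B = 2" using ne by simp
  ultimately show ?thesis by (simp add: row_rank_def)
qed

lemma rank_le2: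
  assumes diag: "\<And>i j. i \<noteq> j \<Longrightarrow> D i j = 0" and z: "\<And>i. i \<noteq> u \<Longrightarrow> i \<noteq> v \<Longrightarrow> D i i = 0"
  shows "rank (tmat D) \<le> 2"
proof -
  let ?W = "{axis u 1, axis v 1} :: (real^4) set"
  have "rows (tmat D) \<subseteq> span ?W"
  proof
    fix x assume "x \<in> rows (tmat D)"
    then obtain i where x: "x = row i (tmat D)" by (auto simp: rows_def)
    have "x = D i i *\<^sub>R axis i 1"
      using diag by (auto simp: x row_tmat vec_eq_iff axis_def)
    moreover have "D i i *\<^sub>R axis i (1::real) \<in> span ?W"
      using z[of i] by (cases "i = u \<or> i = v") (auto intro: span_mul span_base span_zero)
    ultimately show "x \<in> span ?W" by simp
  qed
  then have "dim (rows (tmat D)) \<le> card ?W" by (rule dim_le_card) simp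
  also have "\<dots> \<le> 2" by (simp add: card_insert_le_m1)
  finally show ?thesis by (simp add: row_rank_def)
qed

definition SE :: "real \<Rightarrow> real \<Rightarrow> 4 \<Rightarrow> 4 \<Rightarrow> real" where
  "SE a t i j = (if i = j \<and> i = 3 then a^2 - 1 else if i = j \<and> i = 4 then (a^2 - 1) * (sin t)^2 else 0)"

lemma Ric_eq:
  assumes a: "\<alpha> \<noteq> 0" and p: "p \<in> monopole_M"
  shows "Ric \<alpha> p i j = SE \<alpha> (p$3) i j"
proof -
  have r: "p$2 \<noteq> 0" using p by (auto simp: monopole_M_def)
  have s: "sin (p$3) \<noteq> 0" using sin_ne0[OF p] .
  show ?thesis
    unfolding Ric_def ginv_eq[OF a p] Rdown_eq[OF a p] sum_4
    using r s
    by (cases rule: cases4[of i]; cases rule: cases4[of j]; simp add: gi_def RdE_def SE_def field_simps power2_eq_square)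
qed

lemma Ric_fun: "\<alpha> \<noteq> 0 \<Longrightarrow> p \<in> monopole_M \<Longrightarrow> Ric \<alpha> p = (\<lambda>i j. SE \<alpha> (p$3) i j)"
  by (intro ext) (rule Ric_eq)

definition RdE' :: "real \<Rightarrow> real \<Rightarrow> real \<Rightarrow> 4 \<Rightarrow> 4 \<Rightarrow> 4 \<Rightarrow> 4 \<Rightarrow> real" where
  "RdE' d r s h i j k =
     (if h = 3 \<and> i = 4 \<and> j = 3 \<and> k = 4 then - (d * r^2 * s^2)
      else if h = 3 \<and> i = 4 \<and> j = 4 \<and> k = 3 then d * r^2 * s^2
      else if h = 4 \<and> i = 3 \<and> j = 3 \<and> k = 4 then d * r^2 * s^2
      else if h = 4 \<and> i = 3 \<and> j = 4 \<and> k = 3 then - (d * r^2 * s^2)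
      else 0)"

definition SE' :: "real \<Rightarrow> real \<Rightarrow> 4 \<Rightarrow> 4 \<Rightarrow> real" where
  "SE' d s i j = (if i = j \<and> i = 3 then d else if i = j \<and> i = 4 then d * s^2 else 0)"

lemma KN_alg':
  fixes d r s :: real
  assumes "d \<noteq> 0"
  shows "\<forall>h i j k. RdE' d r s h i j k = r^2 / (2 * d) * KN (SE' d s) (SE' d s) h i j k"
  unfolding forall_4
  by (intro conjI; simp add: RdE'_def SE'_def KN_def; simp add: field_simps power2_eq_square assms)

lemma KN_alg:
  fixes a r t :: real
  assumes "a^2 - 1 \<noteq> 0"
  shows "\<forall>h i j k. RdE a r t h i j k = r^2 / (2 * (a^2 - 1)) * KN (SE a t) (SE a t) h i j k"
proof -
  have e1: "RdE a r t = RdE' (a^2 - 1) r (sin t)"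
    by (intro ext) (simp add: RdE_def RdE'_def algebra_simps)
  have e2: "SE a t = SE' (a^2 - 1) (sin t)"
    by (intro ext) (simp add: SE_def SE'_def)
  show ?thesis unfolding e1 e2 by (rule KN_alg'[OF assms])
qed

theorem proposition3p1:
  fixes \<alpha> :: real
  assumes "0 < \<alpha>" and "\<alpha> < 1"
  shows
   "(\<not> (\<exists>f :: real^4 \<Rightarrow> real. \<forall>p\<in>monopole_M. \<forall>i j. Ric \<alpha> p i j = f p * gm \<alpha> p i j))
    \<and> (\<not> (\<exists>a :: real^4 \<Rightarrow> real. \<forall>p\<in>monopole_M.
          rank (tmat (\<lambda>i j. Ric \<alpha> p i j - a p * gm \<alpha> p i j)) = 1))
    \<and> (\<forall>p\<in>monopole_M. \<forall>i j. Ric2 \<alpha> p i j = (\<alpha>^2 - 1) / (p$2)^2 * Ric \<alpha> p i j)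
    \<and> (\<exists>a :: real^4 \<Rightarrow> real. (\<forall>p\<in>monopole_M. a p = 0) \<and> (\<forall>p\<in>monopole_M.
          rank (tmat (\<lambda>i j. Ric \<alpha> p i j - a p * gm \<alpha> p i j)) = 2))
    \<and> (\<forall>p\<in>monopole_M. \<forall>h i j k. Rdown \<alpha> p h i j k =
          (p$2)^2 / (2 * (\<alpha>^2 - 1)) * KN (Ric \<alpha> p) (Ric \<alpha> p) h i j k)"
proof -
  have a0: "\<alpha> \<noteq> 0" using assms by simp
  have a1: "\<alpha>^2 - 1 \<noteq> 0"
  proof -
    have "\<alpha> * \<alpha> < \<alpha> * 1" using mult_strict_left_mono[OF assms(2) assms(1)] .
    then have "\<alpha>^2 < 1" using assms unfolding power2_eq_square by linarith
    then show ?thesis by simp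
  qed
  define p0 :: "real^4" where "p0 = (\<chi> k. 1)"
  have p0M: "p0 \<in> monopole_M" using pi_gt3 by (simp add: p0_def monopole_M_def)
  have s0: "sin (p0$3) \<noteq> 0" using sin_ne0[OF p0M] .
  have A: "\<not> (\<exists>f :: real^4 \<Rightarrow> real. \<forall>p\<in>monopole_M. \<forall>i j. Ric \<alpha> p i j = f p * gm \<alpha> p i j)"
  proof
    assume "\<exists>f :: real^4 \<Rightarrow> real. \<forall>p\<in>monopole_M. \<forall>i j. Ric \<alpha> p i j = f p * gm \<alpha> p i j"
    then obtain f where f: "\<forall>p\<in>monopole_M. \<forall>i j. Ric \<alpha> p i j = f p * gm \<alpha> p i j" by blast
    have "Ric \<alpha> p0 1 1 = f p0 * gm \<alpha> p0 1 1" using f p0M by blast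
    then have "f p0 = 0" by (simp add: Ric_eq[OF a0 p0M] SE_def gm_def)
    moreover have "Ric \<alpha> p0 3 3 = f p0 * gm \<alpha> p0 3 3" using f p0M by blast
    ultimately show False using a1 by (simp add: Ric_eq[OF a0 p0M] SE_def gm_def)
  qed
  have B: "\<not> (\<exists>a :: real^4 \<Rightarrow> real. \<forall>p\<in>monopole_M.
          rank (tmat (\<lambda>i j. Ric \<alpha> p i j - a p * gm \<alpha> p i j)) = 1)"
  proof
    assume "\<exists>a :: real^4 \<Rightarrow> real. \<forall>p\<in>monopole_M.
          rank (tmat (\<lambda>i j. Ric \<alpha> p i j - a p * gm \<alpha> p i j)) = 1"
    then obtain a where a: "rank (tmat (\<lambda>i j. Ric \<alpha> p0 i j - a p0 * gm \<alpha> p0 i j)) = 1"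
      using p0M by blast
    have "2 \<le> rank (tmat (\<lambda>i j. Ric \<alpha> p0 i j - a p0 * gm \<alpha> p0 i j))"
    proof (cases "a p0 = 0")
      case True
      show ?thesis
        by (rule rank_ge2[of _ 3 4]) (use a1 s0 True in \<open>auto simp: Ric_eq[OF a0 p0M] SE_def gm_def\<close>)
    next
      case False
      show ?thesis
        by (rule rank_ge2[of _ 1 2]) (use a0 False in \<open>auto simp: Ric_eq[OF a0 p0M] SE_def gm_def\<close>)
    qed
    then show False using a by simp
  qed
  have C: "\<forall>p\<in>monopole_M. \<forall>i j. Ric2 \<alpha> p i j = (\<alpha>^2 - 1) / (p$2)^2 * Ric \<alpha> p i j"
  proof (intro ballI allI)
    fix p i j assume p: "p \<in> monopole_M"
    have r: "p$2 \<noteq> 0" using p by (auto simp: monopole_M_def)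
    have s: "sin (p$3) \<noteq> 0" using sin_ne0[OF p] .
    show "Ric2 \<alpha> p i j = (\<alpha>^2 - 1) / (p$2)^2 * Ric \<alpha> p i j"
      unfolding Ric2_def Ric_eq[OF a0 p] ginv_eq[OF a0 p] sum_4 using r s
      by (cases rule: cases4[of i]; cases rule: cases4[of j]; simp add: gi_def SE_def field_simps power2_eq_square)
  qed
  have D: "\<exists>a :: real^4 \<Rightarrow> real. (\<forall>p\<in>monopole_M. a p = 0) \<and> (\<forall>p\<in>monopole_M.
          rank (tmat (\<lambda>i j. Ric \<alpha> p i j - a p * gm \<alpha> p i j)) = 2)"
  proof (intro exI[of _ "\<lambda>_. 0"] conjI ballI)
    fix p :: "real^4" assume p: "p \<in> monopole_M"
    have s: "sin (p$3) \<noteq> 0" using sin_ne0[OF p] .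
    have "2 \<le> rank (tmat (\<lambda>i j. Ric \<alpha> p i j - 0 * gm \<alpha> p i j))"
      by (rule rank_ge2[of _ 3 4]) (use a1 s in \<open>auto simp: Ric_eq[OF a0 p] SE_def gm_def\<close>)
    moreover have "rank (tmat (\<lambda>i j. Ric \<alpha> p i j - 0 * gm \<alpha> p i j)) \<le> 2"
      by (rule rank_le2[of _ 3 4]) (auto simp: Ric_eq[OF a0 p] SE_def gm_def)
    ultimately show "rank (tmat (\<lambda>i j. Ric \<alpha> p i j - 0 * gm \<alpha> p i j)) = 2" by simp
  qed simp
  have E: "\<forall>p\<in>monopole_M. \<forall>h i j k. Rdown \<alpha> p h i j k =
          (p$2)^2 / (2 * (\<alpha>^2 - 1)) * KN (Ric \<alpha> p) (Ric \<alpha> p) h i j k"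
  proof (intro ballI allI)
    fix p h i j k assume p: "p \<in> monopole_M"
    show "Rdown \<alpha> p h i j k = (p$2)^2 / (2 * (\<alpha>^2 - 1)) * KN (Ric \<alpha> p) (Ric \<alpha> p) h i j k"
      unfolding Rdown_eq[OF a0 p] Ric_fun[OF a0 p] using KN_alg[OF a1] by blast
  qed
  show ?thesis by (rule conjI[OF A conjI[OF B conjI[OF C conjI[OF D E]]]])
qed
end
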